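(* For all $n\ge 1$, $\left|\mathrm{Av}_n[\overline{13}42]\right|=D_{n+1}$, where $D_1=2$, $D_2=1$, $D_3=1$ and $D_n=\sum_{k=1}^{n-3}D_kD_{n-k}$ for $n\ge 4$.
   Context: For $\sigma\in S_n$, the cyclic permutation $[\sigma]$ is the set of all rotations of $\sigma$; $[S_n]$ is the set of cyclic permutations of length $n$. $[\sigma]$ contains the vincular pattern $[\overline{13}42]$ if some rotation of $\sigma$ has entries $a,b,c,d$ appearing in this order with $a,b$ adjacent and $a<d<b<c$; $\mathrm{Av}_n[\overline{13}42]$ is the set of $[\sigma]\in[S_n]$ not containing it. *)

theory Defs
  imports Main "HOL-Combinatorics.Multiset_Permutations"
begin

definition cyc_class :: "nat list \<Rightarrow> nat list set" where
  "cyc_class \<sigma> = {rotate k \<sigma> | k. True}"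

text \<open>Linear containment of the vincular pattern 1342 with the first two entries adjacent.\<close>
definition contains_v1342 :: "nat list \<Rightarrow> bool" where
  "contains_v1342 \<tau> \<longleftrightarrow> (\<exists>i k l. i + 1 < k \<and> k < l \<and> l < length \<tau> \<and>
      \<tau> ! i < \<tau> ! l \<and> \<tau> ! l < \<tau> ! (i+1) \<and> \<tau> ! (i+1) < \<tau> ! k)"

definition cyc_contains_v1342 :: "nat list \<Rightarrow> bool" where
  "cyc_contains_v1342 \<sigma> \<longleftrightarrow> (\<exists>\<tau>\<in>cyc_class \<sigma>. contains_v1342 \<tau>)"

definition Av_cyc_v1342 :: "nat \<Rightarrow> nat list set set" where
  "Av_cyc_v1342 n = {cyc_class \<sigma> | \<sigma>. \<sigma> \<in> permutations_of_set {1..n} \<and> \<not> cyc_contains_v1342 \<sigma>}"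

function D :: "nat \<Rightarrow> nat" where
  "D n = (if n = 0 then 0 else if n = 1 then 2 else if n \<le> 3 then 1
          else (\<Sum>k\<in>{1..n-3}. D k * D (n - k)))"
  by auto
termination
  by (relation "measure id") auto

end

theory Submission
  imports Defs
begin

declare D.simps[simp del]

definition cd :: "nat \<Rightarrow> nat \<Rightarrow> nat list \<Rightarrow> bool" where
  "cd b a w \<longleftrightarrow> (\<exists>k l. k < l \<and> l < length w \<and> b < w!k \<and> a < w!l \<and> w!l < b)"

lemma cd_Nil[simp]: "\<not> cd b a []"
  by (simp add: cd_def)

lemma cd_Cons: "cd b a (x#w) \<longleftrightarrow> (b < x \<and> (\<exists>d\<in>set w. a < d \<and> d < b)) \<or> cd b a w"
proof
  assume "cd b a (x#w)"
  then obtain k l where kl: "k < l" "l < length (x#w)" "b < (x#w)!k" "a < (x#w)!l" "(x#w)!l < b"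
    unfolding cd_def by blast
  show "(b < x \<and> (\<exists>d\<in>set w. a < d \<and> d < b)) \<or> cd b a w"
  proof (cases k)
    case 0
    then obtain l' where "l = Suc l'" using kl by (cases l) auto
    then show ?thesis using kl 0 by (auto intro!: bexI[of _ "w!l'"])
  next
    case (Suc k')
    then obtain l' where "l = Suc l'" using kl by (cases l) auto
    then have "cd b a w" using kl Suc unfolding cd_def by (intro exI[of _ k'] exI[of _ l']) auto
    then show ?thesis by blast
  qed
next
  assume "(b < x \<and> (\<exists>d\<in>set w. a < d \<and> d < b)) \<or> cd b a w"
  then show "cd b a (x#w)"
  proof
    assume "b < x \<and> (\<exists>d\<in>set w. a < d \<and> d < b)"
    then obtain l where "l < length w" "a < w!l" "w!l < b" "b < x" by (auto simp: in_set_conv_nth)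
    then show ?thesis unfolding cd_def by (intro exI[of _ 0] exI[of _ "Suc l"]) auto
  next
    assume "cd b a w"
    then obtain k l where "k < l" "l < length w" "b < w!k" "a < w!l" "w!l < b"
      unfolding cd_def by blast
    then show ?thesis unfolding cd_def by (intro exI[of _ "Suc k"] exI[of _ "Suc l"]) auto
  qed
qed

lemma cd_append: "cd b a (P@Q) \<longleftrightarrow> cd b a P \<or> cd b a Q \<or> ((\<exists>c\<in>set P. b < c) \<and> (\<exists>d\<in>set Q. a < d \<and> d < b))"
  by (induction P) (auto simp: cd_Cons)

lemma cd_mono_a: "cd b a w \<Longrightarrow> a' \<le> a \<Longrightarrow> cd b a' w"
  unfolding cd_def by (meson order.strict_trans1)

lemma cd_exc: "cd b a w \<Longrightarrow> \<exists>c\<in>set w. b < c"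
  unfolding cd_def by (meson dual_order.strict_trans nth_mem)

definition adjbad :: "nat \<Rightarrow> nat \<Rightarrow> nat list \<Rightarrow> bool" where
  "adjbad a b w \<longleftrightarrow> a < b \<and> cd b a w"

definition intW :: "nat list \<Rightarrow> nat list \<Rightarrow> bool" where
  "intW A X \<longleftrightarrow> (\<forall>i. Suc i < length A \<longrightarrow>
      \<not> adjbad (A!i) (A!Suc i) (drop (Suc (Suc i)) A @ X @ take i A))"

definition av :: "nat list \<Rightarrow> bool" where
  "av xs \<longleftrightarrow> xs = [] \<or> (intW xs [] \<and> \<not> adjbad (last xs) (hd xs) (butlast (tl xs)))"

lemma intW_append:
  assumes A: "A \<noteq> []" and B: "B \<noteq> []"
  shows "intW (A@B) [] \<longleftrightarrow> intW A B \<and> intW B A \<and> \<not> adjbad (last A) (hd B) (tl B @ butlast A)"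
proof -
  have f1: "(A@B)!i = A!i \<and> (A@B)!Suc i = A!Suc i \<and>
     drop (Suc(Suc i)) (A@B) @ [] @ take i (A@B) = drop (Suc (Suc i)) A @ B @ take i A"
    if "Suc i < length A" for i using that by (simp add: nth_append)
  have f2: "(A@B)!(length A + j) = B!j \<and> (A@B)!Suc (length A + j) = B!Suc j \<and>
     drop (Suc(Suc (length A + j))) (A@B) @ [] @ take (length A + j) (A@B) = drop (Suc (Suc j)) B @ A @ take j B"
    for j by (simp add: nth_append)
  have f3: "(A@B)!(length A - 1) = last A \<and> (A@B)!Suc (length A - 1) = hd B \<and>
     drop (Suc(Suc (length A - 1))) (A@B) @ [] @ take (length A - 1) (A@B) = tl B @ butlast A"
    using A B by (simp add: nth_append last_conv_nth hd_conv_nth butlast_conv_take drop_Suc)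
  show ?thesis
  proof
    assume h: "intW (A@B) []"
    have "intW A B" unfolding intW_def
    proof (intro allI impI)
      fix i assume "Suc i < length A"
      then show "\<not> adjbad (A!i) (A!Suc i) (drop (Suc (Suc i)) A @ B @ take i A)"
        using h f1[of i] unfolding intW_def by (metis length_append trans_less_add1)
    qed
    moreover have "intW B A" unfolding intW_def
    proof (intro allI impI)
      fix j assume "Suc j < length B"
      then show "\<not> adjbad (B!j) (B!Suc j) (drop (Suc (Suc j)) B @ A @ take j B)"
        using h f2[of j] unfolding intW_def
        by (metis add_Suc_right length_append nat_add_left_cancel_less)
    qed
    moreover have "\<not> adjbad (last A) (hd B) (tl B @ butlast A)"
      using h f3 A B unfolding intW_def
      by (metis Suc_pred' add_gr_0 length_append length_greater_0_conv lessI less_add_same_cancel1)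
    ultimately show "intW A B \<and> intW B A \<and> \<not> adjbad (last A) (hd B) (tl B @ butlast A)" by blast
  next
    assume h: "intW A B \<and> intW B A \<and> \<not> adjbad (last A) (hd B) (tl B @ butlast A)"
    show "intW (A@B) []" unfolding intW_def
    proof (intro allI impI)
      fix i assume i: "Suc i < length (A@B)"
      consider "Suc i < length A" | "Suc i = length A" | "length A \<le> i" by linarith
      then show "\<not> adjbad ((A@B)!i) ((A@B)!Suc i) (drop (Suc (Suc i)) (A@B) @ [] @ take i (A@B))"
      proof cases
        case 1
        then show ?thesis using h f1[of i] unfolding intW_def by metis
      next
        case 2
        then have "i = length A - 1" by simp
        then show ?thesis using h f3 by metis
      next
        case 3
        then obtain j where j: "i = length A + j" using le_Suc_ex by blast
        then have "Suc j < length B" using i by simp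
        then show ?thesis using h f2[of j] j unfolding intW_def by metis
      qed
    qed
  qed
qed

lemma av_append:
  assumes A: "A \<noteq> []" and B: "B \<noteq> []"
  shows "av (A@B) \<longleftrightarrow> intW A B \<and> intW B A \<and> \<not> adjbad (last A) (hd B) (tl B @ butlast A)
      \<and> \<not> adjbad (last B) (hd A) (tl A @ butlast B)"
proof -
  have "butlast (tl (A@B)) = tl A @ butlast B" using A B by (cases A) (auto simp: butlast_append)
  then show ?thesis using A B intW_append[OF A B] unfolding av_def by auto
qed

lemma av_swap: "av (A@B) = av (B@A)"
proof (cases "A = [] \<or> B = []")
  case True then show ?thesis by auto
next
  case False then show ?thesis using av_append[of A B] av_append[of B A] by auto
qed

lemma av_rotate: "av (rotate k xs) = av xs"
  by (metis append_take_drop_id av_swap rotate_drop_take)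

lemma contains_adj: "adjbad a b w \<Longrightarrow> contains_v1342 (a#b#w)"
proof -
  assume "adjbad a b w"
  then obtain k l where kl: "a < b" "k < l" "l < length w" "b < w!k" "a < w!l" "w!l < b"
    unfolding adjbad_def cd_def by blast
  show ?thesis unfolding contains_v1342_def
    by (rule exI[of _ 0], rule exI[of _ "Suc (Suc k)"], rule exI[of _ "Suc (Suc l)"]) (use kl in auto)
qed

lemma rotate_at: "Suc i < length xs \<Longrightarrow> rotate i xs = xs!i # xs!Suc i # drop (Suc (Suc i)) xs @ take i xs"
  by (simp add: rotate_drop_take Cons_nth_drop_Suc)

lemma av_not_contains: "av xs \<Longrightarrow> \<not> contains_v1342 xs"
proof
  assume av: "av xs" and "contains_v1342 xs"
  then obtain i k l where h: "i + 1 < k" "k < l" "l < length xs"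
      "xs ! i < xs ! l" "xs ! l < xs ! (i+1)" "xs ! (i+1) < xs ! k"
    unfolding contains_v1342_def by blast
  define w where "w = drop (Suc (Suc i)) xs @ [] @ take i xs"
  obtain k' where k': "k = Suc (Suc i) + k'" using h(1) by (metis Suc_eq_plus1 Suc_leI le_add_diff_inverse)
  obtain l' where l': "l = Suc (Suc i) + l'" using h(1,2) by (metis Suc_eq_plus1 Suc_leI le_add_diff_inverse order.strict_trans)
  have kl': "k' < l'" "l' < length (drop (Suc (Suc i)) xs)" using h unfolding k' l' by auto
  have "w ! k' = xs ! k" "w ! l' = xs ! l" "k' < l'" "l' < length w"
    using kl' unfolding w_def k' l' by (simp_all add: nth_append)
  moreover have "xs!i < xs!Suc i" using h by simp
  ultimately have "adjbad (xs!i) (xs!Suc i) w" using h unfolding adjbad_def cd_def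
    by (intro conjI exI[of _ k'] exI[of _ l']) auto
  moreover have "Suc i < length xs" using h by simp
  ultimately show False using av unfolding av_def intW_def w_def by auto
qed

lemma cyc_contains_iff: "cyc_contains_v1342 xs \<longleftrightarrow> \<not> av xs"
proof
  assume "cyc_contains_v1342 xs"
  then obtain k where "contains_v1342 (rotate k xs)"
    unfolding cyc_contains_v1342_def cyc_class_def by blast
  then show "\<not> av xs" using av_not_contains av_rotate by metis
next
  assume nav: "\<not> av xs"
  then have ne: "xs \<noteq> []" unfolding av_def by auto
  show "cyc_contains_v1342 xs"
  proof (cases "intW xs []")
    case False
    then obtain i where i: "Suc i < length xs"
      "adjbad (xs!i) (xs!Suc i) (drop (Suc (Suc i)) xs @ take i xs)"
      unfolding intW_def by auto
    then have "contains_v1342 (rotate i xs)" using rotate_at[OF i(1)] contains_adj by metis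
    then show ?thesis unfolding cyc_contains_v1342_def cyc_class_def by blast
  next
    case True
    then have bad: "adjbad (last xs) (hd xs) (butlast (tl xs))" using nav ne unfolding av_def by auto
    then obtain x y ys where xs: "xs = x # y # ys"
      unfolding adjbad_def by (cases xs; cases "tl xs") auto
    obtain zs z where zz: "xs = zs @ [z]" using ne by (metis rev_exhaust)
    then obtain zs' where zs: "zs = x # zs'" using xs by (cases zs) auto
    have "rotate (length zs) xs = z # x # zs'" unfolding zz by (simp only: rotate_append) (simp add: zs)
    moreover have "adjbad z x zs'" using bad zz zs by simp
    ultimately have "contains_v1342 (rotate (length zs) xs)" using contains_adj by metis
    then show ?thesis unfolding cyc_contains_v1342_def cyc_class_def by blast
  qed
qed

lemma cd_small: "\<forall>x\<in>set X. x \<le> a \<Longrightarrow> \<not> cd b a X"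
  unfolding cd_def by (meson leD nth_mem)

lemma cd_big: "\<forall>x\<in>set X. b < x \<Longrightarrow> \<not> cd b a X"
  unfolding cd_def by (meson less_asym nth_mem)

lemma cd_ins_small: "\<forall>x\<in>set X. x \<le> a \<Longrightarrow> cd b a (P @ X @ Q) = cd b a (P @ Q)"
  using cd_small[of X a b] by (auto simp: cd_append)

lemma cd_ins_big: "\<forall>x\<in>set X. b < x \<Longrightarrow> b < y \<Longrightarrow> cd b a (P @ X @ y # Q) = cd b a (P @ y # Q)"
  using cd_big[of X b a] by (auto simp: cd_append cd_Cons)

lemma intW_ins_small:
  assumes "\<forall>x\<in>set X. \<forall>z\<in>set A. x \<le> z"
  shows "intW A X = intW A []"
  unfolding intW_def adjbad_def
proof (intro iff_allI imp_cong refl arg_cong[where f=Not])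
  fix i assume "Suc i < length A"
  then have "\<forall>x\<in>set X. x \<le> A!i" using assms by auto
  then show "(A ! i < A ! Suc i \<and> cd (A ! Suc i) (A ! i) (drop (Suc (Suc i)) A @ X @ take i A)) =
      (A ! i < A ! Suc i \<and> cd (A ! Suc i) (A ! i) (drop (Suc (Suc i)) A @ [] @ take i A))"
    using cd_ins_small by simp
qed

lemma av_cons_min:
  assumes m: "\<forall>x\<in>set B. m < x" and B: "B \<noteq> []"
  shows "av (m # B) \<longleftrightarrow> av B \<and> \<not> cd (hd B) m (tl B)"
proof -
  have e: "av ([m] @ B) \<longleftrightarrow> intW [m] B \<and> intW B [m] \<and> \<not> adjbad m (hd B) (tl B @ [])
      \<and> \<not> adjbad (last B) m (tl [m] @ butlast B)"
    using av_append[of "[m]" B] B by simp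
  have i1: "intW [m] B" unfolding intW_def by simp
  have i2: "intW B [m] = intW B []" using m by (intro intW_ins_small) auto
  have l: "\<not> adjbad (last B) m X" for X using m last_in_set[OF B] unfolding adjbad_def by (meson less_asym)
  have h: "adjbad m (hd B) (tl B) = cd (hd B) m (tl B)" using m B unfolding adjbad_def by auto
  have w: "\<not> adjbad (last B) (hd B) (butlast (tl B))" if "\<not> cd (hd B) m (tl B)"
  proof
    assume "adjbad (last B) (hd B) (butlast (tl B))"
    then have "cd (hd B) (last B) (butlast (tl B))" unfolding adjbad_def by auto
    then have c: "cd (hd B) m (butlast (tl B))"
      using cd_mono_a[of "hd B" "last B" "butlast (tl B)" m] m last_in_set[OF B] by (meson less_imp_le)
    then have "tl B \<noteq> []" by (metis butlast.simps(1) cd_Nil)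
    then have "tl B = butlast (tl B) @ [last (tl B)]" by simp
    then have "cd (hd B) m (tl B)" using c cd_append by metis
    then show False using that by simp
  qed
  show ?thesis using e i1 i2 l h w B unfolding av_def by auto
qed

lemma av_split:
  assumes L: "L \<noteq> []" and H: "H \<noteq> []" and Ly: "\<forall>l\<in>set L. l < y" and Hy: "\<forall>h\<in>set H. y < h"
  shows "av (y # L @ H) \<longleftrightarrow> av (y # L) \<and> (\<forall>h\<in>set H. h \<le> hd H) \<and> av H"
proof -
  have e: "av ((y#L) @ H) \<longleftrightarrow> intW (y#L) H \<and> intW H (y#L) \<and> \<not> adjbad (last L) (hd H) (tl H @ y # butlast L)
      \<and> \<not> adjbad (last H) y (L @ butlast H)"
    using av_append[of "y#L" H] H L by simp
  have l: "\<not> adjbad (last H) y X" for X using Hy last_in_set[OF H] unfolding adjbad_def by (meson less_asym)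
  have hH: "hd H \<in> set H" "last H \<in> set H" using H by auto
  have lL: "last L \<in> set L" using L by auto
  have j: "adjbad (last L) (hd H) (tl H @ y # butlast L) \<longleftrightarrow> \<not> (\<forall>h\<in>set H. h \<le> hd H)"
  proof
    assume "adjbad (last L) (hd H) (tl H @ y # butlast L)"
    then have "cd (hd H) (last L) (tl H @ y # butlast L)" unfolding adjbad_def by auto
    moreover have "\<not> cd (hd H) (last L) (y # butlast L)"
      using Ly Hy hH cd_exc[of "hd H" "last L" "y # butlast L"] by (fastforce dest: in_set_butlastD)
    moreover have "\<not> (\<exists>c\<in>set (y # butlast L). hd H < c)"
      using Ly Hy hH by (auto dest!: in_set_butlastD) (meson less_asym less_trans)+
    ultimately have "\<exists>c\<in>set (tl H). hd H < c" using cd_exc[of "hd H" "last L" "y # butlast L"]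
      cd_append[of "hd H" "last L" "tl H" "y # butlast L"] cd_exc[of "hd H" "last L" "tl H"] by blast
    then show "\<not> (\<forall>h\<in>set H. h \<le> hd H)" by (meson leD list.set_sel(2) H)
  next
    assume "\<not> (\<forall>h\<in>set H. h \<le> hd H)"
    then obtain c where c: "c \<in> set H" "hd H < c" by auto
    then have "c \<in> set (tl H)" using H by (metis list.collapse set_ConsD less_irrefl)
    then have "cd (hd H) (last L) (tl H @ y # butlast L)"
      using c Ly Hy lL hH by (subst cd_append) auto
    then show "adjbad (last L) (hd H) (tl H @ y # butlast L)"
      using Ly Hy lL hH unfolding adjbad_def by force
  qed
  have i2: "intW H (y#L) = intW H []"
    using Ly Hy by (intro intW_ins_small) (auto, meson less_trans less_imp_le)
  have aH: "av H \<longleftrightarrow> intW H []" if "\<forall>h\<in>set H. h \<le> hd H"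
    using that H cd_exc unfolding av_def adjbad_def
    by (meson in_set_butlastD leD list.set_sel(2))
  have i1: "intW (y#L) H = intW (y#L) []"
    unfolding intW_def adjbad_def
  proof (intro iff_allI imp_cong refl arg_cong[where f=Not])
    fix i assume i: "Suc i < length (y#L)"
    show "((y#L) ! i < (y#L) ! Suc i \<and> cd ((y#L) ! Suc i) ((y#L) ! i) (drop (Suc (Suc i)) (y#L) @ H @ take i (y#L))) =
      ((y#L) ! i < (y#L) ! Suc i \<and> cd ((y#L) ! Suc i) ((y#L) ! i) (drop (Suc (Suc i)) (y#L) @ [] @ take i (y#L)))"
    proof (cases i)
      case 0
      have "L ! 0 \<in> set L" using L by simp
      then show ?thesis using Ly 0 by (auto simp: nth_Cons dest: less_asym)
    next
      case (Suc j)
      have b: "(y#L) ! Suc i \<in> set L" using i by simp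
      have t: "take i (y#L) = y # take j L" using Suc by simp
      show ?thesis unfolding t using b Ly Hy
        by (metis append_Nil cd_ins_big less_trans)
    qed
  qed
  have aL: "av (y#L) \<longleftrightarrow> intW (y#L) []"
    using L Ly cd_exc unfolding av_def adjbad_def
    by (metis last_ConsR list.distinct(1) list.sel(1,3) in_set_butlastD less_asym)
  show ?thesis using e l j i2 aH i1 aL by auto
qed

definition T0 :: "nat set \<Rightarrow> nat \<Rightarrow> nat list set" where
  "T0 S m = {xs \<in> permutations_of_set S. hd xs = m \<and> av xs}"

definition Cl :: "nat set \<Rightarrow> nat list set set" where
  "Cl S = {cyc_class xs | xs. xs \<in> permutations_of_set S \<and> av xs}"

lemma rotate_back: "xs \<noteq> [] \<Longrightarrow> rotate k xs = rotate (k + (length xs - i mod length xs)) (rotate i xs)"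
proof -
  assume ne: "xs \<noteq> []"
  let ?n = "length xs"
  have "rotate (k + (?n - i mod ?n)) (rotate i xs) = rotate (k + (?n - i mod ?n) + i) xs"
    by (simp add: rotate_rotate)
  also have "(k + (?n - i mod ?n) + i) mod ?n = k mod ?n"
  proof -
    have lt: "i mod ?n < ?n" using ne by simp
    have e: "i = ?n * (i div ?n) + i mod ?n" by simp
    have "k + (?n - i mod ?n) + i = k + ?n + ?n * (i div ?n)"
      using lt e by linarith
    then show ?thesis by (metis mod_mult_self2 mod_add_self2)
  qed
  then have "rotate (k + (?n - i mod ?n) + i) xs = rotate k xs"
    by (metis rotate_conv_mod)
  finally show ?thesis by simp
qed

lemma cyc_class_rotate: "cyc_class (rotate i xs) = cyc_class xs"
proof (cases "xs = []")
  case True then show ?thesis by simp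
next
  case False
  show ?thesis unfolding cyc_class_def
    using rotate_back[OF False] by (auto simp: rotate_rotate) 
qed

lemma in_cyc_class: "xs \<in> cyc_class xs"
  unfolding cyc_class_def by (auto intro: exI[of _ 0])

lemma card_Cl:
  assumes m: "m \<in> S"
  shows "card (Cl S) = card (T0 S m)"
proof -
  have "bij_betw cyc_class (T0 S m) (Cl S)"
  proof (rule bij_betwI')
    fix xs ys assume xs: "xs \<in> T0 S m" and ys: "ys \<in> T0 S m"
    show "(cyc_class xs = cyc_class ys) = (xs = ys)"
    proof
      assume "cyc_class xs = cyc_class ys"
      then have "xs \<in> cyc_class ys" using in_cyc_class by metis
      then obtain k where k: "xs = rotate k ys" unfolding cyc_class_def by auto
      have ne: "ys \<noteq> []" using ys m unfolding T0_def permutations_of_set_def by auto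
      have d: "distinct ys" using ys unfolding T0_def permutations_of_set_def by auto
      have "ys ! (k mod length ys) = ys ! 0"
        using xs ys k hd_rotate_conv_nth[OF ne, of k] hd_conv_nth[OF ne] unfolding T0_def by auto
      then have "k mod length ys = 0" using d ne by (simp add: nth_eq_iff_index_eq)
      then show "xs = ys" using k by simp
    qed simp
  next
    fix xs assume "xs \<in> T0 S m"
    then show "cyc_class xs \<in> Cl S" unfolding T0_def Cl_def by blast
  next
    fix c assume "c \<in> Cl S"
    then obtain xs where c: "c = cyc_class xs" and xs: "xs \<in> permutations_of_set S" "av xs"
      unfolding Cl_def by blast
    then have "m \<in> set xs" using m unfolding permutations_of_set_def by auto
    then obtain i where i: "i < length xs" "xs ! i = m" by (auto simp: in_set_conv_nth)
    have ne: "xs \<noteq> []" using i by auto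
    have "rotate i xs \<in> T0 S m"
      using xs i hd_rotate_conv_nth[OF ne, of i] av_rotate[of i xs]
      unfolding T0_def permutations_of_set_def by auto
    moreover have "c = cyc_class (rotate i xs)" using c cyc_class_rotate by simp
    ultimately show "\<exists>xs\<in>T0 S m. c = cyc_class xs" by blast
  qed
  then show ?thesis by (rule bij_betw_same_card[symmetric])
qed

lemma Av_eq: "Av_cyc_v1342 n = Cl {1..n}"
  unfolding Av_cyc_v1342_def Cl_def using cyc_contains_iff by auto

lemma D_rec:
  assumes n: "n \<ge> 3"
  shows "D (n+1) = 2 * D n + (\<Sum>j\<in>{2..n-2}. D (j+1) * D (n-j))"
proof -
  have "D (n+1) = (\<Sum>k\<in>{1..n+1-3}. D k * D (n + 1 - k))"
    using n by (subst D.simps) simp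
  also have "{1..n+1-3} = insert 1 {2..n-2}" using n by auto
  also have "(\<Sum>k\<in>insert 1 {2..n-2}. D k * D (n + 1 - k)) = D 1 * D n + (\<Sum>k\<in>{2..n-2}. D k * D (n + 1 - k))"
    by simp
  also have "D 1 = 2" by (subst D.simps) simp
  also have "(\<Sum>k\<in>{2..n-2}. D k * D (n + 1 - k)) = (\<Sum>j\<in>{2..n-2}. D (n - 2 + 2 - j) * D (n + 1 - (n - 2 + 2 - j)))"
    by (rule sum.atLeastAtMost_rev)
  also have "n - 2 + 2 = n" using n by simp
  also have "(\<Sum>j\<in>{2..n-2}. D (n - j) * D (n + 1 - (n - j))) = (\<Sum>j\<in>{2..n-2}. D (j+1) * D (n-j))"
  proof (intro sum.cong refl)
    fix j assume "j \<in> {2..n-2}"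
    then have "n + 1 - (n - j) = j + 1" by auto
    then show "D (n - j) * D (n + 1 - (n - j)) = D (j+1) * D (n-j)" by (simp add: mult.commute)
  qed
  finally show ?thesis by simp
qed

lemma D2: "D 2 = 1" by (subst D.simps) simp
lemma D3: "D 3 = 1" by (subst D.simps) simp

lemma split_filter:
  "(\<forall>k l. k < l \<longrightarrow> l < length w \<longrightarrow> P (w!k) \<longrightarrow> P (w!l)) \<Longrightarrow> w = filter (\<lambda>x. \<not> P x) w @ filter P w"
proof (induction w)
  case Nil then show ?case by simp
next
  case (Cons x w)
  have IH: "w = filter (\<lambda>x. \<not> P x) w @ filter P w"
    using Cons.prems by (intro Cons.IH) (metis Suc_mono length_Cons nth_Cons_Suc)
  show ?case
  proof (cases "P x")
    case True
    have "\<forall>z\<in>set w. P z"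
    proof
      fix z assume "z \<in> set w"
      then obtain l where "l < length w" "w ! l = z" by (auto simp: in_set_conv_nth)
      then show "P z" using Cons.prems True by (metis Suc_mono length_Cons nth_Cons_0 nth_Cons_Suc zero_less_Suc)
    qed
    then show ?thesis using True by simp
  next
    case False
    then show ?thesis using IH by simp
  qed
qed

lemma cd_noD: "\<forall>x\<in>set X. \<not> (a < x \<and> x < b) \<Longrightarrow> \<not> cd b a X"
  unfolding cd_def by (meson nth_mem)

lemma av_single: "av [x]"
  unfolding av_def intW_def adjbad_def by simp

lemma av_two: "av [x, y]"
  unfolding av_def intW_def adjbad_def by (auto simp: nth_Cons split: nat.splits)

lemma setL_aux: "set w = S' - {y} \<Longrightarrow> set (filter (\<lambda>x. \<not> y < x) w) = {x\<in>S'. x < (y::nat)}"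
  by (auto simp: not_less order_le_less)

lemma setH_aux: "set w = S' - {y} \<Longrightarrow> S' = S - {m0} \<Longrightarrow> m0 < y \<Longrightarrow> \<forall>x\<in>S. m0 \<le> x \<Longrightarrow>
  set (filter (\<lambda>x. y < x) w) = {x\<in>S. (y::nat) < x}"
  by auto

lemma in_tl: "x \<in> set (tl xs) \<Longrightarrow> x \<in> set xs"
  by (cases xs) auto

lemma decomp:
  assumes fin: "finite S" and c3: "card S \<ge> 3"
    and m0: "m0 = Min S" and S': "S' = S - {m0}" and m1: "m1 = Min S'" and M: "M = Max S"
    and S1: "S1 = (\<lambda>y. {x\<in>S. m0 < x \<and> x \<le> y})" and S2: "S2 = (\<lambda>y. {x\<in>S. y < x})"
  shows "T0 S m0 = Cons m0 ` T0 S' m1 \<union> Cons m0 ` T0 S' M \<union>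
     (\<Union>y\<in>S' - {m1, M}. (\<lambda>(u,v). m0 # u @ v) ` (T0 (S1 y) y \<times> T0 (S2 y) M))"
    (is "?L = ?A \<union> ?B \<union> ?U")
proof -
  have ne: "S \<noteq> {}" using c3 by auto
  have m0S: "m0 \<in> S" using fin ne unfolding m0 by simp
  have m0le: "\<forall>x\<in>S. m0 \<le> x" using fin unfolding m0 by simp
  have m0lt: "\<forall>x\<in>S'. m0 < x" using m0le unfolding S' by (auto simp: order_le_less)
  have finS': "finite S'" using fin S' by simp
  have cS': "card S' = card S - 1" using S' m0S fin by simp
  then have neS': "S' \<noteq> {}" using c3 by auto
  have m1S': "m1 \<in> S'" using finS' neS' unfolding m1 by simp
  have m1le: "\<forall>x\<in>S'. m1 \<le> x" using finS' unfolding m1 by simp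
  have MS: "M \<in> S" using fin ne unfolding M by simp
  have Mge: "\<forall>x\<in>S. x \<le> M" using fin unfolding M by simp
  have "\<exists>x\<in>S'. x \<noteq> m1"
  proof (rule ccontr)
    assume "\<not> ?thesis"
    then have "S' \<subseteq> {m1}" by auto
    then have "card S' \<le> 1" using card_mono[of "{m1}" S'] by simp
    then show False using cS' c3 by simp
  qed
  then obtain x0 where x0: "x0 \<in> S'" "x0 \<noteq> m1" by blast
  then have "m1 < x0" using m1le by (auto simp: order_le_less)
  moreover have "x0 \<le> M" using Mge x0 unfolding S' by auto
  ultimately have m1M: "m1 < M" by simp
  have "m0 < M" using m1M m0lt m1S' by force
  then have MS': "M \<in> S'" using MS unfolding S' by auto
  have m1S: "m1 \<in> S" using m1S' S' by simp
  show ?thesis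
  proof (intro equalityI subsetI)
    fix xs assume xs: "xs \<in> ?L"
    then have sx: "set xs = S" and dx: "distinct xs" and hx: "hd xs = m0" and ax: "av xs"
      unfolding T0_def permutations_of_set_def by auto
    then have "xs \<noteq> []" using ne by auto
    then obtain B where xsB: "xs = m0 # B" using hx by (cases xs) auto
    have setB: "set B = S'" and distB: "distinct B" and m0B: "m0 \<notin> set B"
      using sx dx xsB S' by auto
    have Bne: "B \<noteq> []" using setB neS' by auto
    have Bgt: "\<forall>x\<in>set B. m0 < x" using setB m0lt by simp
    have avB: "av B" and ncd: "\<not> cd (hd B) m0 (tl B)" using av_cons_min[OF Bgt Bne] ax xsB by auto
    obtain y w where Byw: "B = y # w" using Bne by (cases B) auto
    have yS': "y \<in> S'" and yw: "y \<notin> set w" and dw: "distinct w" and sw: "set w = S' - {y}"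
      using setB distB Byw by auto
    have ord: "\<forall>k l. k < l \<longrightarrow> l < length w \<longrightarrow> y < w!k \<longrightarrow> y < w!l"
    proof (intro allI impI)
      fix k l assume kl: "k < l" "l < length w" "y < w!k"
      show "y < w!l"
      proof (rule ccontr)
        assume "\<not> y < w!l"
        moreover have "w!l \<in> set w" using kl by simp
        moreover have "w!l \<noteq> y" using yw \<open>w!l \<in> set w\<close> by auto
        ultimately have "w!l < y" by simp
        have "m0 < w!l" using Bgt Byw \<open>w!l \<in> set w\<close> by simp
        note \<open>w!l < y\<close> this
        then have "cd y m0 w" unfolding cd_def using kl by blast
        then show False using ncd Byw by simp
      qed
    qed
    define L where "L = filter (\<lambda>x. \<not> y < x) w"
    define H where "H = filter (\<lambda>x. y < x) w"
    have wLH: "w = L @ H" unfolding L_def H_def by (rule split_filter[OF ord])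
    have setL: "set L = {x\<in>S'. x < y}" unfolding L_def by (rule setL_aux[OF sw])
    have "m0 < y" using m0lt yS' by simp
    then have setH: "set H = S2 y" unfolding H_def S2 by (rule setH_aux[OF sw S' _ m0le])
    have dL: "distinct L" "y \<notin> set L" and dH: "distinct H" using dw yw unfolding L_def H_def by auto
    have Ly: "\<forall>l\<in>set L. l < y" and Hy: "\<forall>h\<in>set H. y < h" using setL unfolding H_def by auto
    consider "L = []" | "L \<noteq> [] \<and> H = []" | "L \<noteq> [] \<and> H \<noteq> []" by blast
    then show "xs \<in> ?A \<union> ?B \<union> ?U"
    proof cases
      case 1
      have "y = m1"
      proof (rule ccontr)
        assume "y \<noteq> m1"
        moreover have "m1 \<le> y" using m1le yS' by blast
        ultimately have "m1 < y" by simp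
        then have "m1 \<in> set L" using setL m1S' by simp
        then show False using 1 by simp
      qed
      then have "B \<in> T0 S' m1" using setB distB avB Byw unfolding T0_def by auto
      then show ?thesis using xsB by blast
    next
      case 2
      have "y = M"
      proof (rule ccontr)
        assume "y \<noteq> M"
        moreover have "y \<le> M" using Mge yS' unfolding S' by blast
        ultimately have "y < M" by simp
        then have "M \<in> set H" using setH S2 MS by simp
        then show False using 2 by simp
      qed
      then have "B \<in> T0 S' M" using setB distB avB Byw unfolding T0_def by auto
      then show ?thesis using xsB by blast
    next
      case 3
      then have Lne: "L \<noteq> []" and Hne: "H \<noteq> []" by auto
      obtain l where l: "l \<in> set L" using Lne by (cases L) auto
      obtain h where h: "h \<in> set H" using Hne by (cases H) auto
      have "y \<noteq> m1" using l setL m1le by force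
      moreover have "y \<noteq> M" using h setH S2 Mge by force
      ultimately have yMid: "y \<in> S' - {m1, M}" using yS' by simp
      have B': "B = y # L @ H" using Byw wLH by simp
      have sp: "av (y # L) \<and> (\<forall>h\<in>set H. h \<le> hd H) \<and> av H"
        using av_split[OF Lne Hne Ly Hy] avB B' by simp
      have u: "y # L \<in> T0 (S1 y) y"
        using dL sp setL yS' S1 S' m0le unfolding T0_def permutations_of_set_def
        by auto
      have hdH: "hd H \<in> set H" using Hne by simp
      have "y \<le> M" using Mge yS' unfolding S' by blast
      then have "y < M" using \<open>y \<noteq> M\<close> by simp
      then have MH: "M \<in> set H" using setH MS unfolding S2 by simp
      have "M \<le> hd H" using sp MH by blast
      moreover have "hd H \<le> M" using hdH setH Mge unfolding S2 by auto
      ultimately have "hd H = M" by simp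
      then have v: "H \<in> T0 (S2 y) M"
        using dH sp setH unfolding T0_def permutations_of_set_def by auto
      have "xs = (\<lambda>(u,v). m0 # u @ v) (y # L, H)" using xsB B' by simp
      then have "xs \<in> (\<lambda>(u,v). m0 # u @ v) ` (T0 (S1 y) y \<times> T0 (S2 y) M)"
        using u v by blast
      then show ?thesis using yMid by blast
    qed
  next
    fix xs assume xs: "xs \<in> ?A \<union> ?B \<union> ?U"
    have build: "m0 # B \<in> T0 S m0" if B: "B \<in> permutations_of_set S'" "av B" "\<not> cd (hd B) m0 (tl B)" for B
    proof -
      have sB: "set B = S'" and dB: "distinct B" using B unfolding permutations_of_set_def by auto
      then have Bne: "B \<noteq> []" using neS' by auto
      have "\<forall>x\<in>set B. m0 < x" using sB m0lt by simp
      then have "av (m0 # B)" using av_cons_min[OF _ Bne] B by simp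
      moreover have "set (m0 # B) = S" using sB m0S unfolding S' by auto
      moreover have "distinct (m0 # B)" using sB dB unfolding S' by auto
      ultimately show ?thesis unfolding T0_def permutations_of_set_def by simp
    qed
    consider "xs \<in> ?A" | "xs \<in> ?B" | "xs \<in> ?U" using xs by blast
    then show "xs \<in> ?L"
    proof cases
      case 1
      then obtain B where xsB: "xs = m0 # B" and B: "B \<in> T0 S' m1" by blast
      have pB: "B \<in> permutations_of_set S'" and aB: "av B" and hB: "hd B = m1"
        using B unfolding T0_def by auto
      have "\<forall>x\<in>set (tl B). \<not> (m0 < x \<and> x < m1)"
        using pB m1le unfolding permutations_of_set_def by (auto dest: in_tl simp: not_less)
      then have "\<not> cd (hd B) m0 (tl B)" using hB cd_noD by simp
      then show ?thesis using build pB aB xsB by simp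
    next
      case 2
      then obtain B where xsB: "xs = m0 # B" and B: "B \<in> T0 S' M" by blast
      have pB: "B \<in> permutations_of_set S'" and aB: "av B" and hB: "hd B = M"
        using B unfolding T0_def by auto
      have "\<forall>x\<in>set (tl B). \<not> M < x"
        using pB Mge unfolding permutations_of_set_def S' by (auto dest: in_tl simp: not_less)
      then have "\<not> cd (hd B) m0 (tl B)" using hB cd_exc by blast
      then show ?thesis using build pB aB xsB by simp
    next
      case 3
      then obtain y u v where yMid: "y \<in> S' - {m1, M}" and u: "u \<in> T0 (S1 y) y" and v: "v \<in> T0 (S2 y) M"
        and xsuv: "xs = m0 # u @ v" by auto
      have su: "set u = S1 y" and du: "distinct u" and hu: "hd u = y" and au: "av u"
        using u unfolding T0_def permutations_of_set_def by auto
      have sv: "set v = S2 y" and dv: "distinct v" and hv: "hd v = M" and avv: "av v"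
        using v unfolding T0_def permutations_of_set_def by auto
      have yS: "y \<in> S" and m0y: "m0 < y" using yMid m0lt unfolding S' by auto
      have "y \<in> S1 y" using yS m0y unfolding S1 by simp
      then have "u \<noteq> []" using su by auto
      then obtain L where uL: "u = y # L" using hu by (cases u) auto
      have sL: "set L = S1 y - {y}" using su du uL by auto
      have "m1 \<le> y" using m1le yMid by blast
      then have "m1 \<in> S1 y" using m1S m0lt m1S' unfolding S1 by simp
      moreover have "m1 \<noteq> y" using yMid by simp
      ultimately have "m1 \<in> set L" using sL by blast
      then have Lne: "L \<noteq> []" by (cases L) auto
      have Ly: "\<forall>l\<in>set L. l < y" using sL unfolding S1 by auto
      have "y \<le> M" using Mge yS by simp
      then have "y < M" using yMid by simp
      then have "M \<in> S2 y" using MS unfolding S2 by simp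
      then have vne: "v \<noteq> []" using sv by auto
      have Hy: "\<forall>h\<in>set v. y < h" using sv unfolding S2 by simp
      have hm: "\<forall>h\<in>set v. h \<le> hd v" using sv hv Mge unfolding S2 by simp
      have avB: "av (y # L @ v)" using av_split[OF Lne vne Ly Hy] au avv hm uL by simp
      have "set (u @ v) = S'" using su sv m0lt m0y unfolding S1 S2 S' by auto
      moreover have "distinct (u @ v)" using du dv su sv unfolding S1 S2 by auto
      ultimately have pB: "y # L @ v \<in> permutations_of_set S'" using uL by auto
      have "\<not> cd y m0 L" using Ly cd_exc by (meson less_asym)
      moreover have "\<not> cd y m0 v" using Hy by (intro cd_noD) (auto dest: less_asym)
      moreover have "\<not> (\<exists>c\<in>set L. y < c)" using Ly by (auto dest: less_asym)
      ultimately have "\<not> cd y m0 (L @ v)" by (simp add: cd_append)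
      then have "m0 # (y # L @ v) \<in> T0 S m0" using build[OF pB avB] by simp
      then show ?thesis using xsuv uL by simp
    qed
  qed
qed

lemma finite_T0: "finite (T0 S m)"
  unfolding T0_def by (rule finite_subset[OF _ finite_permutations_of_set[of S]]) auto

lemma rec_step:
  assumes fin: "finite S" and n: "card S = n" and n3: "n \<ge> 3"
    and IH: "\<And>S'. finite S' \<Longrightarrow> 1 \<le> card S' \<Longrightarrow> card S' < n \<Longrightarrow> card (Cl S') = D (card S' + 1)"
  shows "card (Cl S) = D (n+1)"
proof -
  define m0 where "m0 = Min S"
  define S' where "S' = S - {m0}"
  define m1 where "m1 = Min S'"
  define M where "M = Max S"
  define S1 where "S1 = (\<lambda>y. {x\<in>S. m0 < x \<and> x \<le> y})"
  define S2 where "S2 = (\<lambda>y. {x\<in>S. y < x})"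
  define Mid where "Mid = S' - {m1, M}"
  define f where "f = (\<lambda>(u,v). m0 # u @ (v::nat list))"
  define A where "A = Cons m0 ` T0 S' m1"
  define B where "B = Cons m0 ` T0 S' M"
  define P where "P = (\<lambda>y. f ` (T0 (S1 y) y \<times> T0 (S2 y) M))"
  have c3: "card S \<ge> 3" using n n3 by simp
  have dec: "T0 S m0 = A \<union> B \<union> (\<Union>y\<in>Mid. P y)"
    unfolding A_def B_def P_def Mid_def f_def
    by (rule decomp[OF fin c3 m0_def S'_def m1_def M_def S1_def S2_def])
  have ne: "S \<noteq> {}" using c3 by auto
  have m0S: "m0 \<in> S" using fin ne unfolding m0_def by simp
  have m0le: "\<forall>x\<in>S. m0 \<le> x" using fin unfolding m0_def by simp
  have m0lt: "\<forall>x\<in>S'. m0 < x" using m0le unfolding S'_def by (auto simp: order_le_less)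
  have finS': "finite S'" using fin unfolding S'_def by simp
  have cS': "card S' = n - 1" using m0S fin n unfolding S'_def by simp
  then have neS': "S' \<noteq> {}" using n3 by auto
  have m1S': "m1 \<in> S'" using finS' neS' unfolding m1_def by simp
  have m1le: "\<forall>x\<in>S'. m1 \<le> x" using finS' unfolding m1_def by simp
  have MS: "M \<in> S" using fin ne unfolding M_def by simp
  have Mge: "\<forall>x\<in>S. x \<le> M" using fin unfolding M_def by simp
  have "\<exists>x\<in>S'. x \<noteq> m1"
  proof (rule ccontr)
    assume "\<not> ?thesis"
    then have "S' \<subseteq> {m1}" by auto
    then have "card S' \<le> 1" using card_mono[of "{m1}" S'] by simp
    then show False using cS' n3 by simp
  qed
  then obtain x0 where x0: "x0 \<in> S'" "x0 \<noteq> m1" by blast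
  then have "m1 < x0" using m1le by (auto simp: order_le_less)
  moreover have "x0 \<le> M" using Mge x0 unfolding S'_def by auto
  ultimately have m1M: "m1 < M" by simp
  have "m0 < M" using m1M m0lt m1S' by force
  then have MS': "M \<in> S'" using MS unfolding S'_def by auto
  have m1S: "m1 \<in> S" using m1S' unfolding S'_def by simp
  have finMid: "finite Mid" using finS' unfolding Mid_def by simp
  have MidS: "\<And>y. y \<in> Mid \<Longrightarrow> y \<in> S \<and> m0 < y \<and> m1 < y \<and> y < M"
  proof -
    fix y assume y: "y \<in> Mid"
    then have "y \<in> S'" "y \<noteq> m1" "y \<noteq> M" unfolding Mid_def by auto
    moreover have "m1 \<le> y" using m1le \<open>y \<in> S'\<close> by blast
    moreover have "y \<le> M" using Mge \<open>y \<in> S'\<close> unfolding S'_def by blast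
    ultimately show "y \<in> S \<and> m0 < y \<and> m1 < y \<and> y < M" using m0lt unfolding S'_def by auto
  qed
  define sec where "sec = (\<lambda>xs::nat list. hd (tl xs))"
  have secA: "\<And>xs. xs \<in> A \<Longrightarrow> sec xs = m1" unfolding A_def T0_def sec_def by auto
  have secB: "\<And>xs. xs \<in> B \<Longrightarrow> sec xs = M" unfolding B_def T0_def sec_def by auto
  have secP: "\<And>xs. y \<in> Mid \<Longrightarrow> xs \<in> P y \<Longrightarrow> sec xs = y" for y
  proof -
    fix xs assume y: "y \<in> Mid" and xs: "xs \<in> P y"
    then obtain u v where u: "u \<in> T0 (S1 y) y" and xs: "xs = m0 # u @ v" unfolding P_def f_def by auto
    have "y \<in> S1 y" using MidS[OF y] unfolding S1_def by simp
    then have "u \<noteq> []" using u unfolding T0_def permutations_of_set_def by auto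
    then show "sec xs = y" using u xs unfolding sec_def T0_def by simp
  qed
  have finA: "finite A" and finB: "finite B" and finP: "\<And>y. finite (P y)"
    unfolding A_def B_def P_def using finite_T0 by auto
  have "card (T0 S m0) = card A + card B + (\<Sum>y\<in>Mid. card (P y))"
  proof -
    have dAB: "A \<inter> B = {}" using secA secB m1M by fastforce
    have dU: "(A \<union> B) \<inter> (\<Union>y\<in>Mid. P y) = {}"
    proof -
      have "xs \<notin> P y" if "xs \<in> A \<union> B" "y \<in> Mid" for xs y
        using that secA secB secP[of y xs] unfolding Mid_def by auto
      then show ?thesis by blast
    qed
    have cU: "card (\<Union>y\<in>Mid. P y) = (\<Sum>y\<in>Mid. card (P y))"
      by (rule card_UN_disjoint[OF finMid]) (use finP secP in \<open>auto, metis\<close>)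
    show ?thesis unfolding dec
      using card_Un_disjoint[OF _ _ dU] card_Un_disjoint[OF finA finB dAB] cU finA finB finP finMid
      by simp
  qed
  also have "card A = D n"
  proof -
    have "card A = card (T0 S' m1)" unfolding A_def by (rule card_image) simp
    also have "\<dots> = card (Cl S')" using card_Cl[OF m1S'] by simp
    also have "\<dots> = D (card S' + 1)" using IH[OF finS'] cS' n3 by simp
    finally show ?thesis using cS' n3 by simp
  qed
  also have "card B = D n"
  proof -
    have "card B = card (T0 S' M)" unfolding B_def by (rule card_image) simp
    also have "\<dots> = card (Cl S')" using card_Cl[OF MS'] by simp
    also have "\<dots> = D (card S' + 1)" using IH[OF finS'] cS' n3 by simp
    finally show ?thesis using cS' n3 by simp
  qed
  also have "(\<Sum>y\<in>Mid. card (P y)) = (\<Sum>y\<in>Mid. D (card (S1 y) + 1) * D (n - card (S1 y)))"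
  proof (intro sum.cong refl)
    fix y assume y: "y \<in> Mid"
    have yS: "y \<in> S" and m0y: "m0 < y" and yM: "y < M" using MidS[OF y] by auto
    have inj: "inj_on f (T0 (S1 y) y \<times> T0 (S2 y) M)"
    proof (rule inj_onI)
      fix p q assume p: "p \<in> T0 (S1 y) y \<times> T0 (S2 y) M" and q: "q \<in> T0 (S1 y) y \<times> T0 (S2 y) M"
        and e: "f p = f q"
      obtain u v where puv: "p = (u,v)" by (cases p)
      obtain u' v' where quv: "q = (u',v')" by (cases q)
      have "length u = card (S1 y)" "length u' = card (S1 y)"
        using p q puv quv unfolding T0_def by (auto dest: length_finite_permutations_of_set)
      then show "p = q" using e puv quv unfolding f_def by auto
    qed
    have fin1: "finite (S1 y)" and fin2: "finite (S2 y)" using fin unfolding S1_def S2_def by auto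
    have s1: "S1 y \<subseteq> S - {m0}" unfolding S1_def by auto
    have s2: "S2 y \<subseteq> S - {m0}" using m0y unfolding S2_def by auto
    have dis: "S1 y \<inter> S2 y = {}" unfolding S1_def S2_def by auto
    have un: "S1 y \<union> S2 y = S - {m0}" using m0le yS unfolding S1_def S2_def by (auto simp: order_le_less)
    have cs: "card (S1 y) + card (S2 y) = n - 1"
      using card_Un_disjoint[OF fin1 fin2 dis] un m0S fin n by simp
    have "y \<in> S1 y" using yS m0y unfolding S1_def by simp
    then have "0 < card (S1 y)" using fin1 by (auto simp: card_gt_0_iff)
    then have c1: "1 \<le> card (S1 y)" by simp
    have "M \<in> S2 y" using MS yM unfolding S2_def by simp
    then have "0 < card (S2 y)" using fin2 by (auto simp: card_gt_0_iff)
    then have c2: "1 \<le> card (S2 y)" by simp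
    have "card (P y) = card (T0 (S1 y) y) * card (T0 (S2 y) M)"
      unfolding P_def using card_image[OF inj] card_cartesian_product by simp
    also have "card (T0 (S1 y) y) = D (card (S1 y) + 1)"
      using card_Cl[OF \<open>y \<in> S1 y\<close>] IH[OF fin1 c1] cs c2 n3 by simp
    also have "card (T0 (S2 y) M) = D (card (S2 y) + 1)"
      using card_Cl[OF \<open>M \<in> S2 y\<close>] IH[OF fin2 c2] cs c1 n3 by simp
    also have "card (S2 y) + 1 = n - card (S1 y)" using cs c1 c2 by simp
    finally show "card (P y) = D (card (S1 y) + 1) * D (n - card (S1 y))" .
  qed
  also have "\<dots> = (\<Sum>j\<in>{2..n-2}. D (j+1) * D (n-j))"
  proof -
    let ?c = "\<lambda>y. card (S1 y)"
    have fin1: "\<And>y. finite (S1 y)" using fin unfolding S1_def by auto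
    have inj: "inj_on ?c Mid"
    proof (rule inj_onI)
      fix y y' assume y: "y \<in> Mid" and y': "y' \<in> Mid" and e: "?c y = ?c y'"
      show "y = y'"
      proof (rule ccontr)
        assume "y \<noteq> y'"
        then consider "y < y'" | "y' < y" by linarith
        then show False
        proof cases
          case 1
          have s: "S1 y \<subseteq> S1 y'" using 1 unfolding S1_def by auto
          have "y' \<in> S1 y' - S1 y" using 1 MidS[OF y'] unfolding S1_def by auto
          then have "S1 y \<subset> S1 y'" using s by blast
          then show False using psubset_card_mono[OF fin1] e by (metis less_irrefl)
        next
          case 2
          have s: "S1 y' \<subseteq> S1 y" using 2 unfolding S1_def by auto
          have "y \<in> S1 y - S1 y'" using 2 MidS[OF y] unfolding S1_def by auto
          then have "S1 y' \<subset> S1 y" using s by blast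
          then show False using psubset_card_mono[OF fin1] e by (metis less_irrefl)
        qed
      qed
    qed
    have sub: "?c ` Mid \<subseteq> {2..n-2}"
    proof
      fix j assume "j \<in> ?c ` Mid"
      then obtain y where y: "y \<in> Mid" and j: "j = ?c y" by blast
      have yS: "y \<in> S" and m0y: "m0 < y" and m1y: "m1 < y" and yM: "y < M" using MidS[OF y] by auto
      have "{m1, y} \<subseteq> S1 y" using m1S m0lt m1S' yS m0y m1y unfolding S1_def by auto
      then have "card {m1, y} \<le> card (S1 y)" using fin1 card_mono by blast
      then have "2 \<le> j" using m1y j by simp
      have "S1 y \<subseteq> S - {m0, M}" using yM unfolding S1_def by auto
      then have "card (S1 y) \<le> card (S - {m0, M})" using fin card_mono by blast
      also have "card (S - {m0, M}) = n - 2" using fin n m0S MS \<open>m0 < M\<close> by (simp add: card_Diff_subset)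
      finally show "j \<in> {2..n-2}" using \<open>2 \<le> j\<close> j by simp
    qed
    have "card (?c ` Mid) = card Mid" using card_image[OF inj] .
    also have "card Mid = n - 3" using finS' cS' m1S' MS' m1M unfolding Mid_def by (simp add: card_Diff_subset)
    finally have "?c ` Mid = {2..n-2}" using sub by (intro card_subset_eq) auto
    then have "(\<Sum>j\<in>{2..n-2}. D (j+1) * D (n-j)) = (\<Sum>y\<in>Mid. D (?c y + 1) * D (n - ?c y))"
      using sum.reindex[OF inj, of "\<lambda>j. D (j+1) * D (n-j)"] by simp
    then show ?thesis by simp
  qed
  finally have "card (T0 S m0) = D (n+1)" using D_rec[OF n3] by simp
  then show ?thesis using card_Cl[OF m0S] by simp
qed


lemma main_count: "finite S \<Longrightarrow> card S = n \<Longrightarrow> 1 \<le> n \<Longrightarrow> card (Cl S) = D (n+1)"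
proof (induction n arbitrary: S rule: less_induct)
  case (less n)
  consider "n = 1" | "n = 2" | "n \<ge> 3" using less.prems by linarith
  then show ?case
  proof cases
    case 1
    then obtain x where S: "S = {x}" using less.prems card_1_singletonE by metis
    have "T0 S x = {[x]}" unfolding S T0_def using av_single by auto
    then show ?thesis using card_Cl[of x S] S 1 D2 by (simp add: numeral_2_eq_2)
  next
    case 2
    then obtain x y where S: "S = {x, y}" and xy: "x \<noteq> y" using less.prems by (meson card_2_iff)
    define a where "a = min x y"
    define b where "b = max x y"
    have ab: "a < b" and S': "S = {a, b}" using xy S unfolding a_def b_def by (auto simp: min_def max_def)
    have pe: "permutations_of_set {a,b} = {[a,b],[b,a]}" using ab by (simp add: permutations_of_set_doubleton)
    have "T0 S a = {xs \<in> {[a,b],[b,a]}. hd xs = a \<and> av xs}" unfolding S' T0_def pe by simp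
    also have "\<dots> = {[a,b]}"
    proof (rule set_eqI)
      fix xs show "xs \<in> {xs \<in> {[a,b],[b,a]}. hd xs = a \<and> av xs} \<longleftrightarrow> xs \<in> {[a,b]}"
        using ab av_two[of a b] by (cases xs) auto
    qed
    finally have "T0 S a = {[a, b]}" .
    then show ?thesis using card_Cl[of a S] S' 2 D3 by (simp add: numeral_3_eq_3)
  next
    case 3
    show ?thesis
      by (rule rec_step[OF less.prems(1,2) 3]) (use less.IH in auto)
  qed
qed

theorem theorem5p5:
  fixes n :: nat
  assumes "n \<ge> 1"
  shows "card (Av_cyc_v1342 n) = D (n + 1)"
  using main_count[of "{1..n}" n] assms by (simp add: Av_eq)

end
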